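(* In the base model, define the expected population utility loss $PL(\mu_A,\sigma_A)=\mathbb E_{\theta\sim N(\mu_T,\sigma_T^2)}[L^\star(\theta)]$, where $L^\star$ is computed with AI prior $N(\mu_A,\sigma_A^2)$. Then: (1) for every $\sigma_A>0$, $PL(\cdot,\sigma_A)$ is minimized at $\mu_A=\mu_T$, and $\frac{\partial PL}{\partial\mu_A}(\mu_T,\sigma_T)=0$; (2) if $\Gamma=\infty$ and $\gamma\ge2\sigma_T^2$, then $\frac{\partial PL}{\partial\sigma_A}(\mu_T,\sigma_T)<0$.
   Context: Base model. Fix $\mu_T\in\mathbb R$, $\sigma_T>0$, $\mu_A\in\mathbb R$, $\sigma_A>0$, $\gamma>0$ (cost of human–AI interaction) and $\Gamma\in(0,\infty]$ (utility cost of doing the task without AI). User preferences $\theta$ are distributed in the population as $N(\mu_T,\sigma_T^2)$ with density $\pi_T$. A user of type $\theta$ chooses a noise level $\sigma\in[0,\infty]$; the AI observes $s=\theta+\varepsilon$, $\varepsilon\sim N(0,\sigma^2)$, and outputs the posterior mean under the prior $N(\mu_A,\sigma_A^2)$: $\theta_A(s,\sigma)=\frac{\sigma_A^2}{\sigma_A^2+\sigma^2}s+\frac{\sigma^2}{\sigma_A^2+\sigma^2}\mu_A$ (with $\theta_A=\mu_A$ when $\sigma=\infty$). Fidelity error: $E(\theta,\sigma)=\mathbb E_{s\sim N(\theta,\sigma^2)}[(\theta_A(s,\sigma)-\theta)^2]$. Communication cost: $I(\sigma)=-\tfrac12\ln\frac{\sigma^2}{\sigma_T^2+\sigma^2}$,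 with $I(0)=+\infty$, $I(\infty)=0$. Loss: $L(\theta,\sigma)=E(\theta,\sigma)+\gamma I(\sigma)$, $\sigma^\star(\theta)\in\arg\min_{\sigma\in[0,\infty]}L(\theta,\sigma)$, and $L^\star(\theta)=\min(L(\theta,\sigma^\star(\theta)),\Gamma)$; $\Gamma=\infty$ means $L^\star(\theta)=\min_\sigma L(\theta,\sigma)$. *)

theory Defs
  imports "HOL-Probability.Probability"
begin

definition post_mean :: "real \<Rightarrow> real \<Rightarrow> real \<Rightarrow> real \<Rightarrow> real" where
  "post_mean muA sigA sig s =
     sigA\<^sup>2 / (sigA\<^sup>2 + sig\<^sup>2) * s + sig\<^sup>2 / (sigA\<^sup>2 + sig\<^sup>2) * muA"

text \<open>Fidelity error E(theta, sigma) = expectation over s ~ N(theta, sigma^2), written as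
  s = theta + sigma * z with z standard normal; for sigma = infinity the output is muA.\<close>
definition fid_err :: "real \<Rightarrow> real \<Rightarrow> real \<Rightarrow> ereal \<Rightarrow> real" where
  "fid_err muA sigA theta sig =
     (if sig = \<infinity> then (muA - theta)\<^sup>2
      else (LINT z|lborel. std_normal_density z *
              (post_mean muA sigA (real_of_ereal sig) (theta + real_of_ereal sig * z) - theta)\<^sup>2))"

definition comm_cost :: "real \<Rightarrow> ereal \<Rightarrow> ereal" where
  "comm_cost sigT sig =
     (if sig = 0 then \<infinity> else if sig = \<infinity> then 0
      else ereal (- (1/2) * ln ((real_of_ereal sig)\<^sup>2 / (sigT\<^sup>2 + (real_of_ereal sig)\<^sup>2))))"

definition loss :: "real \<Rightarrow> real \<Rightarrow> real \<Rightarrow> real \<Rightarrow> real \<Rightarrow> ereal \<Rightarrow> ereal" where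
  "loss sigT gam muA sigA theta sig =
     ereal (fid_err muA sigA theta sig) + ereal gam * comm_cost sigT sig"

definition opt_loss :: "real \<Rightarrow> real \<Rightarrow> ereal \<Rightarrow> real \<Rightarrow> real \<Rightarrow> real \<Rightarrow> ereal" where
  "opt_loss sigT gam Gam muA sigA theta =
     min (INF sig\<in>{0..\<infinity>}. loss sigT gam muA sigA theta sig) Gam"

definition pop_loss :: "real \<Rightarrow> real \<Rightarrow> real \<Rightarrow> ereal \<Rightarrow> real \<Rightarrow> real \<Rightarrow> real" where
  "pop_loss muT sigT gam Gam muA sigA =
     (LINT theta|lborel. normal_density muT sigT theta *
        real_of_ereal (opt_loss sigT gam Gam muA sigA theta))"

end

theory Submission
  imports Defs
begin

lemma gauss_sq:
  "(LINT z|lborel. std_normal_density z * (c + b * z)\<^sup>2) = c\<^sup>2 + b\<^sup>2"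
proof -
  have i0: "has_bochner_integral lborel (\<lambda>z. std_normal_density z * z^(2*0)) 1"
    using std_normal_moment_even[of 0] by simp
  have i1: "has_bochner_integral lborel (\<lambda>z. std_normal_density z * z^(2*0+1)) 0"
    using std_normal_moment_odd[of 0] by simp
  have i2: "has_bochner_integral lborel (\<lambda>z. std_normal_density z * z^(2*1)) 1"
    using std_normal_moment_even[of 1] by simp
  have "has_bochner_integral lborel (\<lambda>z. c\<^sup>2 * (std_normal_density z * z^(2*0)) + (2*c*b) * (std_normal_density z * z^(2*0+1)) + b\<^sup>2 * (std_normal_density z * z^(2*1))) (c\<^sup>2 * 1 + (2*c*b)*0 + b\<^sup>2 * 1)"
    by (intro has_bochner_integral_add has_bochner_integral_mult_right i0 i1 i2)
  then have "has_bochner_integral lborel (\<lambda>z. std_normal_density z * (c + b * z)\<^sup>2) (c\<^sup>2 + b\<^sup>2)"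
    by (rule has_bochner_integral_cong[THEN iffD1, rotated 3]) (auto simp: power2_eq_square algebra_simps)
  then show ?thesis by (rule has_bochner_integral_integral_eq)
qed

lemma fid_err_fin:
  assumes "sigA \<noteq> 0"
  shows "fid_err muA sigA th (ereal r) =
    (r\<^sup>2/(sigA\<^sup>2+r\<^sup>2))\<^sup>2 * (muA-th)\<^sup>2 + (sigA\<^sup>2/(sigA\<^sup>2+r\<^sup>2))\<^sup>2 * r\<^sup>2"
proof -
  have pos: "sigA\<^sup>2 + r\<^sup>2 > 0" using assms by (simp add: add_pos_nonneg)
  have "\<And>z. post_mean muA sigA r (th + r * z) - th = (r\<^sup>2/(sigA\<^sup>2+r\<^sup>2)) * (muA - th) + (sigA\<^sup>2/(sigA\<^sup>2+r\<^sup>2) * r) * z"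
    using pos assms unfolding post_mean_def by (simp add: divide_simps) (simp add: algebra_simps power2_eq_square)
  then have "fid_err muA sigA th (ereal r) = (LINT z|lborel. std_normal_density z * ((r\<^sup>2/(sigA\<^sup>2+r\<^sup>2)) * (muA - th) + (sigA\<^sup>2/(sigA\<^sup>2+r\<^sup>2) * r) * z)\<^sup>2)"
    unfolding fid_err_def by simp
  also have "\<dots> = ((r\<^sup>2/(sigA\<^sup>2+r\<^sup>2)) * (muA - th))\<^sup>2 + (sigA\<^sup>2/(sigA\<^sup>2+r\<^sup>2) * r)\<^sup>2"
    by (rule gauss_sq)
  finally show ?thesis by (simp add: power_mult_distrib power_divide)
qed

definition psi :: "real \<Rightarrow> real \<Rightarrow> real \<Rightarrow> real \<Rightarrow> real" where
  "psi T g s a = s*a*(1-a) + g/2 * ln (1 + T*a/(s*(1-a)))"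
definition kk :: "real \<Rightarrow> real \<Rightarrow> real \<Rightarrow> real \<Rightarrow> real \<Rightarrow> real" where
  "kk T g s D a = (1-a)\<^sup>2 * D + psi T g s a"
definition Vr :: "real \<Rightarrow> real \<Rightarrow> real \<Rightarrow> real \<Rightarrow> real" where
  "Vr T g s D = Inf (kk T g s D ` {0..<1})"

lemma psi_nonneg: "T > 0 \<Longrightarrow> g > 0 \<Longrightarrow> s > 0 \<Longrightarrow> 0 \<le> a \<Longrightarrow> a < 1 \<Longrightarrow> psi T g s a \<ge> 0"
  unfolding psi_def by (intro add_nonneg_nonneg mult_nonneg_nonneg ln_ge_zero) auto

lemma psi_zero[simp]: "psi T g s 0 = 0"
  unfolding psi_def by simp

lemma kk_zero[simp]: "kk T g s D 0 = D"
  unfolding kk_def by simp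

lemma kk_lower: "T > 0 \<Longrightarrow> g > 0 \<Longrightarrow> s > 0 \<Longrightarrow> 0 \<le> a \<Longrightarrow> a < 1 \<Longrightarrow> kk T g s D a \<ge> min D 0"
proof -
  assume *: "T > 0" "g > 0" "s > 0" "0 \<le> a" "a < 1"
  have "(1-a)\<^sup>2 \<le> 1" "0 \<le> (1-a)\<^sup>2" using * by (auto simp: power2_eq_square mult_le_one)
  then have "(1-a)\<^sup>2 * D \<ge> min D 0"
    by (cases "D \<ge> 0") (auto simp: min_def intro: mult_nonneg_nonneg order_trans[OF _ mult_right_mono_neg[of "(1-a)\<^sup>2" 1 D]])
  then show ?thesis using psi_nonneg[OF *] unfolding kk_def by linarith
qed

lemma bdd_kk: "T > 0 \<Longrightarrow> g > 0 \<Longrightarrow> s > 0 \<Longrightarrow> bdd_below (kk T g s D ` {0..<1})"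
  by (rule bdd_belowI[of _ "min D 0"]) (auto intro: kk_lower)

lemma Vr_le: "T > 0 \<Longrightarrow> g > 0 \<Longrightarrow> s > 0 \<Longrightarrow> 0 \<le> a \<Longrightarrow> a < 1 \<Longrightarrow> Vr T g s D \<le> kk T g s D a"
  unfolding Vr_def by (rule cInf_lower) (auto intro: bdd_kk)

lemma Vr_ge: "(\<And>a. 0 \<le> a \<Longrightarrow> a < 1 \<Longrightarrow> y \<le> kk T g s D a) \<Longrightarrow> y \<le> Vr T g s D"
  unfolding Vr_def by (rule cInf_greatest) auto

lemma Vr_le_D: "T > 0 \<Longrightarrow> g > 0 \<Longrightarrow> s > 0 \<Longrightarrow> Vr T g s D \<le> D"
  using Vr_le[of T g s 0 D] by simp

lemma loss_at_inf: "loss sigT gam muA sigA th \<infinity> = ereal ((muA - th)\<^sup>2)"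
  unfolding loss_def fid_err_def comm_cost_def by simp

lemma loss_at_zero: "gam > 0 \<Longrightarrow> loss sigT gam muA sigA th 0 = \<infinity>"
  unfolding loss_def comm_cost_def by simp

lemma loss_at_r:
  assumes "sigA \<noteq> 0" "sigT > 0" "r > 0"
  shows "loss sigT gam muA sigA th (ereal r) =
    ereal (kk (sigT\<^sup>2) gam (sigA\<^sup>2) ((muA-th)\<^sup>2) (sigA\<^sup>2/(sigA\<^sup>2+r\<^sup>2)))"
proof -
  define s where "s = sigA\<^sup>2"
  define a where "a = s/(s+r\<^sup>2)"
  have s: "s > 0" using assms unfolding s_def by simp
  have r2: "r\<^sup>2 > 0" using assms by simp
  have d: "s + r\<^sup>2 > 0" using s r2 by linarith
  have a1: "1 - a = r\<^sup>2/(s+r\<^sup>2)" unfolding a_def using s r2 d by (simp add: field_simps)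
  have f: "fid_err muA sigA th (ereal r) = (1-a)\<^sup>2 * (muA-th)\<^sup>2 + s*a*(1-a)"
    unfolding fid_err_fin[OF assms(1)] a1 unfolding a_def s_def[symmetric]
    using s r2 d by (simp add: field_simps power2_eq_square)
  have sa: "s*(1-a) = a * r\<^sup>2" by (simp only: a1) (simp add: a_def)
  have a0: "a > 0" unfolding a_def using s d by simp
  have q: "a/(s*(1-a)) = 1/r\<^sup>2"
    unfolding sa using a0 by simp
  have "1 + sigT\<^sup>2*a/(s*(1-a)) = 1 + sigT\<^sup>2 * (1/r\<^sup>2)"
    by (metis q times_divide_eq_right)
  also have "\<dots> = (sigT\<^sup>2 + r\<^sup>2)/r\<^sup>2" using r2 by (simp add: field_simps)
  finally have "1 + sigT\<^sup>2*a/(s*(1-a)) = (sigT\<^sup>2 + r\<^sup>2)/r\<^sup>2" .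
  then have l: "ln (1 + sigT\<^sup>2*a/(s*(1-a))) = - ln (r\<^sup>2/(sigT\<^sup>2+r\<^sup>2))"
    using r2 assms by (simp add: ln_div add.commute)
  have c: "comm_cost sigT (ereal r) = ereal (- (1/2) * ln (r\<^sup>2/(sigT\<^sup>2+r\<^sup>2)))"
    unfolding comm_cost_def using assms by simp
  show ?thesis
    unfolding loss_def f c kk_def psi_def s_def[symmetric] a_def[symmetric] l by simp
qed

lemma inf_loss:
  assumes sA: "sigA \<noteq> 0" and sT: "sigT > 0" and g: "gam > 0"
  shows "(INF sig\<in>{0..\<infinity>}. loss sigT gam muA sigA th sig) = ereal (Vr (sigT\<^sup>2) gam (sigA\<^sup>2) ((muA-th)\<^sup>2))"
proof -
  define s where "s = sigA\<^sup>2"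
  have s: "s > 0" using sA unfolding s_def by simp
  have T: "sigT\<^sup>2 > 0" using sT by simp
  have "ereal (Vr (sigT\<^sup>2) gam s ((muA-th)\<^sup>2)) = (INF a\<in>{0..<1}. ereal (kk (sigT\<^sup>2) gam s ((muA-th)\<^sup>2) a))"
    unfolding Vr_def by (subst ereal_Inf'[OF bdd_kk[OF T g s]]) (auto simp: image_comp)
  also have "\<dots> = (INF sig\<in>{0..\<infinity>}. loss sigT gam muA sigA th sig)"
  proof (rule INF_eq)
    fix a :: real assume a: "a \<in> {0..<1}"
    show "\<exists>sig\<in>{0..\<infinity>}. loss sigT gam muA sigA th sig \<le> ereal (kk (sigT\<^sup>2) gam s ((muA-th)\<^sup>2) a)"
    proof (cases "a = 0")
      case True then show ?thesis by (intro bexI[of _ \<infinity>]) (auto simp: loss_at_inf)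
    next
      case False
      then have a0: "a > 0" "a < 1" using a by auto
      define r where "r = sqrt (s*(1-a)/a)"
      have r: "r > 0" unfolding r_def using a0 s by simp
      have r2: "r\<^sup>2 = s*(1-a)/a" unfolding r_def using a0 s by simp
      have "s/(s+r\<^sup>2) = a" unfolding r2 using a0 s by (simp add: field_simps)
      then show ?thesis using r
        by (intro bexI[of _ "ereal r"]) (auto simp: loss_at_r[OF sA sT r] s_def)
    qed
  next
    fix sig :: ereal assume sig: "sig \<in> {0..\<infinity>}"
    show "\<exists>a\<in>{0..<1}. ereal (kk (sigT\<^sup>2) gam s ((muA-th)\<^sup>2) a) \<le> loss sigT gam muA sigA th sig"
    proof (cases sig)
      case (real r)
      show ?thesis
      proof (cases "r = 0")
        case True then show ?thesis using real g by (intro bexI[of _ 0]) (auto simp: loss_at_zero zero_ereal_def[symmetric])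
      next
        case False
        then have r: "r > 0" using sig real by auto
        have "s/(s+r\<^sup>2) < 1" using s r by (simp add: divide_less_eq add_pos_pos)
        then show ?thesis using s r real
          by (intro bexI[of _ "s/(s+r\<^sup>2)"]) (auto simp: loss_at_r[OF sA sT r] s_def)
      qed
    next
      case PInf then show ?thesis by (intro bexI[of _ 0]) (auto simp: loss_at_inf)
    next
      case MInf then show ?thesis using sig by auto
    qed
  qed
  finally show ?thesis unfolding s_def by simp
qed

lemma opt_loss_eq:
  assumes "sigA \<noteq> 0" "sigT > 0" "gam > 0"
  shows "opt_loss sigT gam Gam muA sigA th = min (ereal (Vr (sigT\<^sup>2) gam (sigA\<^sup>2) ((muA-th)\<^sup>2))) Gam"
  unfolding opt_loss_def inf_loss[OF assms] ..

lemma Vr_nonneg: "T > 0 \<Longrightarrow> g > 0 \<Longrightarrow> s > 0 \<Longrightarrow> D \<ge> 0 \<Longrightarrow> Vr T g s D \<ge> 0"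
proof (rule Vr_ge)
  fix a :: real assume "T > 0" "g > 0" "s > 0" "D \<ge> 0" "0 \<le> a" "a < 1"
  then show "0 \<le> kk T g s D a" using kk_lower[of T g s a D] by simp
qed

lemma Vr_mono: assumes "T > 0" "g > 0" "s > 0" "D \<le> D'" shows "Vr T g s D \<le> Vr T g s D'"
proof (rule Vr_ge)
  fix a :: real assume a: "0 \<le> a" "a < 1"
  have "(1-a)\<^sup>2 * D \<le> (1-a)\<^sup>2 * D'" using assms by (simp add: mult_left_mono)
  then have "kk T g s D a \<le> kk T g s D' a" unfolding kk_def by simp
  then show "Vr T g s D \<le> kk T g s D' a" using Vr_le[OF assms(1-3) a, of D] by linarith
qed

lemma Vr_second: assumes "T > 0" "g > 0" "s > 0" "e1 + e2 \<ge> 0"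
  shows "Vr T g s (D + e1) + Vr T g s (D + e2) \<le> 2 * Vr T g s D + (e1 + e2)"
proof -
  have "(Vr T g s (D + e1) + Vr T g s (D + e2) - (e1+e2)) / 2 \<le> Vr T g s D"
  proof (rule Vr_ge)
    fix a :: real assume a: "0 \<le> a" "a < 1"
    have w: "(1-a)\<^sup>2 \<le> 1" using a by (simp add: power2_eq_square mult_le_one)
    have "(1-a)\<^sup>2 * (e1 + e2) \<le> 1 * (e1+e2)" by (rule mult_right_mono[OF w assms(4)])
    then have "kk T g s (D+e1) a + kk T g s (D+e2) a \<le> 2 * kk T g s D a + (e1+e2)"
      unfolding kk_def by (simp add: algebra_simps)
    then have "Vr T g s (D + e1) + Vr T g s (D + e2) - (e1+e2) \<le> 2 * kk T g s D a"
      using Vr_le[OF assms(1-3) a, of "D+e1"] Vr_le[OF assms(1-3) a, of "D+e2"] by linarith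
    then show "(Vr T g s (D + e1) + Vr T g s (D + e2) - (e1+e2)) / 2 \<le> kk T g s D a"
      by simp
  qed
  then show ?thesis by (simp add: field_simps)
qed

definition GG :: "real \<Rightarrow> real \<Rightarrow> ereal \<Rightarrow> real \<Rightarrow> real \<Rightarrow> real" where
  "GG T g Gm s D = real_of_ereal (min (ereal (Vr T g s D)) Gm)"

lemma GG_alt: assumes "Gm > 0"
  shows "GG T g Gm s D = (if Gm = \<infinity> then Vr T g s D else min (Vr T g s D) (real_of_ereal Gm))"
  using assms by (cases Gm) (auto simp: GG_def min_def)

lemma GG_mono: assumes "T > 0" "g > 0" "s > 0" "Gm > 0" "D \<le> D'"
  shows "GG T g Gm s D \<le> GG T g Gm s D'"
  using Vr_mono[OF assms(1-3) assms(5)] unfolding GG_alt[OF assms(4)] by auto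

lemma GG_nonneg: assumes "T > 0" "g > 0" "s > 0" "Gm > 0" "D \<ge> 0"
  shows "GG T g Gm s D \<ge> 0"
proof -
  have "real_of_ereal Gm > 0" if "Gm \<noteq> \<infinity>" using assms(4) that by (cases Gm) auto
  then show ?thesis using Vr_nonneg[OF assms(1-3) assms(5)] unfolding GG_alt[OF assms(4)] by auto
qed

lemma GG_le: assumes "T > 0" "g > 0" "s > 0" "Gm > 0"
  shows "GG T g Gm s D \<le> D"
  using Vr_le_D[OF assms(1-3), of D] unfolding GG_alt[OF assms(4)] by auto

lemma GG_second: assumes "T > 0" "g > 0" "s > 0" "Gm > 0" "e1 + e2 \<ge> 0"
  shows "GG T g Gm s (D + e1) + GG T g Gm s (D + e2) \<le> 2 * GG T g Gm s D + (e1 + e2)"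
  using Vr_second[OF assms(1-3) assms(5), of D] unfolding GG_alt[OF assms(4)] using assms(5)
  by (auto simp: min_def)

lemma GG_measurable[measurable]: assumes "T > 0" "g > 0" "s > 0" "Gm > 0"
  shows "GG T g Gm s \<in> borel_measurable borel"
  by (rule borel_measurable_mono) (auto simp: mono_def intro: GG_mono[OF assms])

lemma pop_loss_eq:
  assumes "sigA \<noteq> 0" "sigT > 0" "gam > 0"
  shows "pop_loss muT sigT gam Gam m sigA = (LINT th|lborel. normal_density muT sigT th * GG (sigT\<^sup>2) gam Gam (sigA\<^sup>2) ((m-th)\<^sup>2))"
  unfolding pop_loss_def opt_loss_eq[OF assms] GG_def ..

lemma integrable_nd_sq: assumes "sig > 0"
  shows "integrable lborel (\<lambda>th. normal_density mu sig th * (c - th)\<^sup>2)"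
proof -
  have "integrable lborel (\<lambda>th. normal_density mu sig th * (th - mu)^2 + (-2*(c-mu)) * (normal_density mu sig th * (th - mu)^1) + (c-mu)\<^sup>2 * (normal_density mu sig th * (th - mu)^0))"
    using assms by (intro Bochner_Integration.integrable_add Bochner_Integration.integrable_mult_right integrable_normal_moment)
  moreover have "(\<lambda>th. normal_density mu sig th * (th - mu)^2 + (-2*(c-mu)) * (normal_density mu sig th * (th - mu)^1) + (c-mu)\<^sup>2 * (normal_density mu sig th * (th - mu)^0))
     = (\<lambda>th. normal_density mu sig th * (c - th)\<^sup>2)"
    by (auto simp: fun_eq_iff power2_eq_square algebra_simps)
  ultimately show ?thesis by simp
qed

lemma integrable_nd_GG: assumes "sig > 0" "T > 0" "g > 0" "s > 0" "Gm > 0"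
  shows "integrable lborel (\<lambda>th. normal_density mu sig th * GG T g Gm s ((c - th)\<^sup>2))"
proof (rule Bochner_Integration.integrable_bound[OF integrable_nd_sq[OF assms(1), of mu c]])
  show "(\<lambda>th. normal_density mu sig th * GG T g Gm s ((c - th)\<^sup>2)) \<in> borel_measurable lborel"
    using GG_measurable[OF assms(2-5)] by measurable
  show "AE x in lborel. norm (normal_density mu sig x * GG T g Gm s ((c - x)\<^sup>2)) \<le> norm (normal_density mu sig x * (c - x)\<^sup>2)"
    using GG_nonneg[OF assms(2-5)] GG_le[OF assms(2-5)]
    by (auto simp: abs_mult intro!: mult_left_mono)
qed

lemma integral_reflect: "(LINT x|lborel. f x) = (LINT x|lborel. f (t - x))" for f :: "real \<Rightarrow> real"
  using lborel_integral_real_affine[of "-1" f t] by simp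

lemma nd_reflect: "normal_density mu sig (mu + m - x) = normal_density m sig x"
  unfolding normal_density_def by (simp add: power2_commute)

lemma nd_compare: assumes "(th - mu)\<^sup>2 \<le> (th - m)\<^sup>2"
  shows "normal_density m sig th \<le> normal_density mu sig th"
proof -
  have "- (th - m)\<^sup>2 / (2 * sig\<^sup>2) \<le> - (th - mu)\<^sup>2 / (2 * sig\<^sup>2)"
    using assms by (intro divide_right_mono) auto
  then show ?thesis unfolding normal_density_def by (intro mult_left_mono) auto
qed

lemma part1_gen:
  fixes G :: "real \<Rightarrow> real"
  assumes sig: "sig > 0" and Gm: "mono G" and G[measurable]: "G \<in> borel_measurable borel"
    and int: "\<And>mu c. integrable lborel (\<lambda>th. normal_density mu sig th * G ((c - th)\<^sup>2))"
  shows "(LINT th|lborel. normal_density mu sig th * G ((mu - th)\<^sup>2)) \<le> (LINT th|lborel. normal_density mu sig th * G ((m - th)\<^sup>2))"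
proof -
  define I1 where "I1 = (LINT th|lborel. normal_density mu sig th * G ((m - th)\<^sup>2))"
  define I0 where "I0 = (LINT th|lborel. normal_density mu sig th * G ((mu - th)\<^sup>2))"
  have I1': "I1 = (LINT th|lborel. normal_density m sig th * G ((mu - th)\<^sup>2))"
    unfolding I1_def by (subst integral_reflect[where t="mu+m"]) (simp add: nd_reflect power2_commute)
  have I0': "I0 = (LINT th|lborel. normal_density m sig th * G ((m - th)\<^sup>2))"
    unfolding I0_def by (subst integral_reflect[where t="mu+m"]) (simp add: nd_reflect power2_commute)
  have "0 \<le> (LINT th|lborel. (normal_density mu sig th - normal_density m sig th) * (G ((m - th)\<^sup>2) - G ((mu - th)\<^sup>2)))"
  proof (rule integral_nonneg_AE, rule AE_I2)
    fix th
    show "0 \<le> (normal_density mu sig th - normal_density m sig th) * (G ((m - th)\<^sup>2) - G ((mu - th)\<^sup>2))"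
    proof (cases "(th - mu)\<^sup>2 \<le> (th - m)\<^sup>2")
      case True
      then have "normal_density m sig th \<le> normal_density mu sig th" by (rule nd_compare)
      moreover have "G ((mu - th)\<^sup>2) \<le> G ((m - th)\<^sup>2)" using True Gm by (auto simp: mono_def power2_commute)
      ultimately show ?thesis by simp
    next
      case False
      then have "normal_density mu sig th \<le> normal_density m sig th" by (intro nd_compare) simp
      moreover have "G ((m - th)\<^sup>2) \<le> G ((mu - th)\<^sup>2)" using False Gm by (auto simp: mono_def power2_commute)
      ultimately show ?thesis by (simp add: mult_nonpos_nonpos)
    qed
  qed
  also have "\<dots> = (LINT th|lborel. normal_density mu sig th * G ((m - th)\<^sup>2) - normal_density mu sig th * G ((mu - th)\<^sup>2)
      + (normal_density m sig th * G ((mu - th)\<^sup>2) - normal_density m sig th * G ((m - th)\<^sup>2)))"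
    by (rule Bochner_Integration.integral_cong) (auto simp: algebra_simps)
  also have "\<dots> = (I1 - I0) + ((LINT th|lborel. normal_density m sig th * G ((mu - th)\<^sup>2)) - (LINT th|lborel. normal_density m sig th * G ((m - th)\<^sup>2)))"
    unfolding I1_def I0_def using int
    by (simp add: Bochner_Integration.integral_add Bochner_Integration.integral_diff)
  also have "\<dots> = (I1 - I0) + (I1 - I0)" using I1' I0' by simp
  finally show ?thesis unfolding I1_def I0_def by simp
qed

lemma deriv_quad:
  fixes f :: "real \<Rightarrow> real"
  assumes r: "r > 0" and b: "\<And>h. \<bar>h\<bar> < r \<Longrightarrow> \<bar>f (x + h) - f x - d * h\<bar> \<le> C * h\<^sup>2"
  shows "(f has_real_derivative d) (at x)"
proof -
  have "((\<lambda>h. (f (x + h) - f x) / h - d) \<longlongrightarrow> 0) (at 0)"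
  proof (rule Lim_null_comparison)
    have "eventually (\<lambda>h. \<bar>h\<bar> < r \<and> h \<noteq> 0) (at (0::real))"
      using r by (auto simp: eventually_at dist_real_def intro!: exI[of _ r])
    then show "eventually (\<lambda>h. norm ((f (x + h) - f x) / h - d) \<le> C * \<bar>h\<bar>) (at 0)"
    proof (rule eventually_mono)
      fix h :: real assume h: "\<bar>h\<bar> < r \<and> h \<noteq> 0"
      have "(f (x + h) - f x) / h - d = (f (x + h) - f x - d * h) / h" using h by (simp add: field_simps)
      then have "norm ((f (x + h) - f x) / h - d) = \<bar>f (x + h) - f x - d * h\<bar> / \<bar>h\<bar>" by simp
      also have "\<dots> \<le> C * h\<^sup>2 / \<bar>h\<bar>" using b h by (intro divide_right_mono) auto
      also have "\<dots> = C * \<bar>h\<bar>"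
      proof -
        have hh: "h\<^sup>2 = \<bar>h\<bar> * \<bar>h\<bar>" by (simp add: power2_eq_square)
        show ?thesis using h by (simp add: field_simps power2_eq_square)
      qed
      finally show "norm ((f (x + h) - f x) / h - d) \<le> C * \<bar>h\<bar>" .
    qed
    show "((\<lambda>h. C * \<bar>h\<bar>) \<longlongrightarrow> 0) (at 0)"
      by (auto intro!: tendsto_eq_intros)
  qed
  then have "((\<lambda>h. (f (x + h) - f x) / h) \<longlongrightarrow> d) (at 0)"
    by (simp add: LIM_zero_iff)
  then show ?thesis by (simp add: DERIV_def)
qed


lemma part2_gen:
  fixes G :: "real \<Rightarrow> real"
  assumes sig: "sig > 0" and Gm: "mono G" and G[measurable]: "G \<in> borel_measurable borel"
    and int: "\<And>mu c. integrable lborel (\<lambda>th. normal_density mu sig th * G ((c - th)\<^sup>2))"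
    and sec: "\<And>D e1 e2. e1 + e2 \<ge> 0 \<Longrightarrow> G (D + e1) + G (D + e2) \<le> 2 * G D + (e1 + e2)"
  shows "((\<lambda>m. LINT th|lborel. normal_density mu sig th * G ((m - th)\<^sup>2)) has_real_derivative 0) (at mu)"
proof -
  define P where "P = (\<lambda>m. LINT th|lborel. normal_density mu sig th * G ((m - th)\<^sup>2))"
  have p1: "P mu \<le> P m" for m unfolding P_def by (rule part1_gen[OF sig Gm G int])
  have key: "P (mu + h) + P (mu - h) \<le> 2 * P mu + 2 * h\<^sup>2" for h
  proof -
    define A where "A th = normal_density mu sig th * G ((mu + h - th)\<^sup>2)" for th
    define B where "B th = normal_density mu sig th * G ((mu - h - th)\<^sup>2)" for th
    define Z where "Z th = normal_density mu sig th * G ((mu - th)\<^sup>2)" for th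
    have iA: "integrable lborel A" unfolding A_def by (rule int)
    have iB: "integrable lborel B" unfolding B_def by (rule int)
    have iZ: "integrable lborel Z" unfolding Z_def by (rule int)
    have "P (mu + h) + P (mu - h) = integral\<^sup>L lborel A + integral\<^sup>L lborel B"
      unfolding P_def A_def B_def by simp
    also have "\<dots> = (LINT th|lborel. A th + B th)" using iA iB by simp
    also have "\<dots> \<le> (LINT th|lborel. 2 * Z th + 2 * h\<^sup>2 * normal_density mu sig th)"
    proof (rule integral_mono)
      show "integrable lborel (\<lambda>th. A th + B th)" using iA iB by simp
      show "integrable lborel (\<lambda>th. 2 * Z th + 2 * h\<^sup>2 * normal_density mu sig th)" using iZ sig by (intro Bochner_Integration.integrable_add Bochner_Integration.integrable_mult_right integrable_normal_density)
      fix th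
      have a: "(mu + h - th)\<^sup>2 = (mu - th)\<^sup>2 + (2*h*(mu-th) + h\<^sup>2)" by (simp add: power2_eq_square algebra_simps)
      have b: "(mu - h - th)\<^sup>2 = (mu - th)\<^sup>2 + (-2*h*(mu-th) + h\<^sup>2)" by (simp add: power2_eq_square algebra_simps)
      have "G ((mu + h - th)\<^sup>2) + G ((mu - h - th)\<^sup>2) \<le> 2 * G ((mu - th)\<^sup>2) + 2*h\<^sup>2"
        unfolding a b using sec[of "2*h*(mu-th) + h\<^sup>2" "-2*h*(mu-th) + h\<^sup>2" "(mu - th)\<^sup>2"] by simp
      then have "normal_density mu sig th * (G ((mu + h - th)\<^sup>2) + G ((mu - h - th)\<^sup>2)) \<le> normal_density mu sig th * (2 * G ((mu - th)\<^sup>2) + 2*h\<^sup>2)"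
        by (rule mult_left_mono) simp
      then show "A th + B th \<le> 2 * Z th + 2 * h\<^sup>2 * normal_density mu sig th"
        unfolding A_def B_def Z_def by (simp add: algebra_simps)
    qed
    also have "\<dots> = 2 * P mu + 2 * h\<^sup>2"
    proof -
      have i2: "integrable lborel (\<lambda>th. 2 * h\<^sup>2 * normal_density mu sig th)" using sig by simp
      have "(LINT th|lborel. 2 * Z th + 2 * h\<^sup>2 * normal_density mu sig th) = (LINT th|lborel. 2 * Z th) + (LINT th|lborel. 2 * h\<^sup>2 * normal_density mu sig th)"
        using iZ i2 by (intro Bochner_Integration.integral_add) auto
      also have "\<dots> = 2 * P mu + 2 * h\<^sup>2" using sig unfolding P_def Z_def by simp
      finally show ?thesis .
    qed
    finally show ?thesis .
  qed
  have "(P has_real_derivative 0) (at mu)"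
  proof (rule deriv_quad[where r=1 and C=2])
    fix h :: real
    show "\<bar>P (mu + h) - P mu - 0 * h\<bar> \<le> 2 * h\<^sup>2"
      using key[of h] p1[of "mu+h"] p1[of "mu-h"] by simp
  qed simp
  then show ?thesis unfolding P_def .
qed


lemma ln_bound2: fixes w :: real assumes "0 \<le> w" "w < 1" shows "w + w\<^sup>2/2 \<le> - ln (1 - w)"
proof (cases "w = 0")
  case True then show ?thesis by simp
next
  case False
  then have w: "0 < w" using assms by simp
  define h where "h x = - ln (1 - x) - x - x\<^sup>2/2" for x :: real
  have d: "(h has_real_derivative (1/(1-x) - 1 - x)) (at x)" if "0 \<le> x" "x \<le> w" for x
  proof -
    have "x < 1" using that assms by simp
    then show ?thesis unfolding h_def
      by (auto intro!: derivative_eq_intros simp: field_simps)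
  qed
  obtain z where z: "0 < z" "z < w" "h w - h 0 = (w - 0) * (1/(1-z) - 1 - z)"
    using MVT2[OF w d] by auto
  have z1: "1 - z > 0" using z assms by simp
  have "1/(1-z) - 1 - z = z\<^sup>2/(1-z)" using z1 by (simp add: field_simps power2_eq_square)
  also have "\<dots> \<ge> 0" using z1 by simp
  finally have "w * (1/(1-z) - 1 - z) \<ge> 0" using w by simp
  then have "h w \<ge> h 0" using z(3) by simp
  then show ?thesis unfolding h_def by simp
qed

definition Ff :: "real \<Rightarrow> real \<Rightarrow> real \<Rightarrow> real \<Rightarrow> real" where
  "Ff T g D u = u\<^sup>2 * D + T * u * (1 - u) - g/2 * ln u"

lemma kk_T: assumes "T > 0" "0 \<le> a" "a < 1" shows "kk T g T D a = Ff T g D (1 - a)"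
proof -
  have "1 + T * a / (T * (1 - a)) = 1 / (1 - a)" using assms by (simp add: field_simps)
  then have "ln (1 + T * a / (T * (1 - a))) = - ln (1 - a)" using assms by (simp add: ln_div)
  then show ?thesis unfolding kk_def psi_def Ff_def by (simp add: algebra_simps)
qed

definition astar :: "real \<Rightarrow> real \<Rightarrow> real \<Rightarrow> real" where
  "astar T g D = (if 2*D \<le> T + g/2 then 0 else 1 - (sqrt (T\<^sup>2 + 4*(D-T)*g) - T)/(4*(D-T)))"

lemma sep_case1:
  assumes T: "T > 0" and g: "g \<ge> 2*T" and D: "2*D \<le> T + g/2" and u: "0 < u" "u \<le> 1"
  shows "Ff T g D u \<ge> Ff T g D 1 + g/4 * (1 - u)\<^sup>2"
proof -
  define w where "w = 1 - u"
  have w: "0 \<le> w" "w < 1" using u unfolding w_def by auto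
  have l: "- ln u \<ge> w + w\<^sup>2/2" using ln_bound2[OF w] unfolding w_def by simp
  have uw: "u = 1 - w" unfolding w_def by simp
  have "0 \<le> (1-w)*(T + g/2 - 2*D) + w*(g/2 - D)"
    using w T g D by (intro add_nonneg_nonneg mult_nonneg_nonneg) auto
  then have "0 \<le> w * ((1-w)*(T + g/2 - 2*D) + w*(g/2 - D))" using w by simp
  moreover have "Ff T g D u - Ff T g D 1 - g/4 * (1 - u)\<^sup>2 \<ge> w * ((1-w)*(T + g/2 - 2*D) + w*(g/2 - D)) + g/2 * (- ln u - w - w\<^sup>2/2)"
    unfolding Ff_def uw by (simp add: field_simps power2_eq_square)
  moreover have "g/2 * (- ln u - w - w\<^sup>2/2) \<ge> 0" using l g T by simp
  ultimately show ?thesis by linarith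
qed

lemma ustar_facts:
  assumes T: "T > 0" and g: "g \<ge> 2*T" and D: "\<not> 2*D \<le> T + g/2"
  defines "Q \<equiv> D - T"
  defines "u \<equiv> (sqrt (T\<^sup>2 + 4*Q*g) - T)/(4*Q)"
  shows "Q > 0" "0 < u" "u < 1" "2*Q*u\<^sup>2 + T*u - g/2 = 0" "astar T g D = 1 - u"
proof -
  show Q: "Q > 0" unfolding Q_def using D g by simp
  have gp: "g > 0" using T g by simp
  define S where "S = sqrt (T\<^sup>2 + 4*Q*g)"
  have S2: "S\<^sup>2 = T\<^sup>2 + 4*Q*g" unfolding S_def using Q gp T by (intro real_sqrt_pow2) (simp add: add_nonneg_nonneg)
  have ST: "T < S" unfolding S_def using Q gp T by (intro real_less_rsqrt) simp
  have S1: "S < 4*Q + T" unfolding S_def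
  proof (rule real_less_lsqrt)
    show "0 \<le> 4*Q + T" using Q T by simp
    have "4*Q*g < 4*Q*(4*Q + 2*T)" using Q D g unfolding Q_def by (intro mult_strict_left_mono) auto
    then show "T\<^sup>2 + 4*Q*g < (4*Q + T)\<^sup>2" by (simp add: power2_eq_square algebra_simps)
  qed
  have uS: "u = (S - T)/(4*Q)" unfolding u_def S_def ..
  show "0 < u" unfolding uS using ST Q by simp
  show "u < 1" unfolding uS using S1 Q by (simp add: divide_less_eq)
  show "2*Q*u\<^sup>2 + T*u - g/2 = 0" unfolding uS using Q S2
    by (simp add: field_simps power2_eq_square)
  show "astar T g D = 1 - u" unfolding astar_def u_def Q_def using D by simp
qed

lemma sep_case2:
  assumes T: "T > 0" and g: "g \<ge> 2*T" and D: "\<not> 2*D \<le> T + g/2" and u: "0 < u" "u \<le> 1"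
  shows "Ff T g D u \<ge> Ff T g D (1 - astar T g D) + g/4 * (u - (1 - astar T g D))\<^sup>2"
proof -
  define Q where "Q = D - T"
  define us where "us = (sqrt (T\<^sup>2 + 4*Q*g) - T)/(4*Q)"
  note F = ustar_facts[OF T g D, folded Q_def, folded us_def]
  have gp: "g > 0" using T g by simp
  have as: "1 - astar T g D = us" using F(5) by simp
  define G where "G y = Ff T g D y - g/4 * (y - us)\<^sup>2" for y
  define Gd where "Gd y = 2*D*y + T*(1 - 2*y) - g/2 * (1/y) - g/2 * (y - us)" for y
  have dG: "(G has_real_derivative Gd y) (at y)" if "0 < y" for y
    unfolding G_def Gd_def Ff_def using that
    by (auto intro!: derivative_eq_intros simp: field_simps power2_eq_square)
  have Gdeq: "Gd y = (y - us) * (2*Q + g/(2*y*us) - g/2)" if "0 < y" for y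
  proof -
    have "Gd y - (y - us) * (2*Q + g/(2*y*us) - g/2) = (2*Q*us\<^sup>2 + T*us - g/2)/us"
      unfolding Gd_def Q_def using that F(2) by (simp add: field_simps power2_eq_square)
    then show ?thesis using F(4) by simp
  qed
  have B: "2*Q + g/(2*y*us) - g/2 > 0" if "0 < y" "y \<le> 1" for y
  proof -
    have "y * us \<le> 1" using that F(2,3) by (simp add: mult_le_one)
    then have "g/2 \<le> (g/2)/(y*us)" using that F(2) gp by (simp add: le_divide_eq)
    then show ?thesis using F(1) by (simp add: field_simps)
  qed
  have "G u \<ge> G us"
  proof (cases "u = us")
    case True then show ?thesis by simp
  next
    case False
    show ?thesis
    proof (cases "us < u")
      case True
      obtain z where z: "us < z" "z < u" "G u - G us = (u - us) * Gd z"
        using MVT2[OF True, of G Gd] dG F(2) by force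
      have "Gd z \<ge> 0" using Gdeq[of z] B[of z] z F(2) u by (simp add: mult_nonneg_nonneg)
      then have "(u - us) * Gd z \<ge> 0" using True by simp
      then show ?thesis using z(3) by linarith
    next
      case False2: False
      then have lt: "u < us" using False by simp
      obtain z where z: "u < z" "z < us" "G us - G u = (us - u) * Gd z"
        using MVT2[OF lt, of G Gd] dG u by force
      have "Gd z \<le> 0" using Gdeq[of z] B[of z] z F(3) u by (simp add: mult_nonpos_nonneg)
      then have "(us - u) * Gd z \<le> 0" using lt by (simp add: mult_nonneg_nonpos)
      then show ?thesis using z(3) by linarith
    qed
  qed
  then show ?thesis unfolding as G_def by simp
qed

lemma sep:
  assumes T: "T > 0" and g: "g \<ge> 2*T" and a: "0 \<le> a" "a < 1"
  shows "0 \<le> astar T g D" "astar T g D < 1"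
    "kk T g T D a \<ge> kk T g T D (astar T g D) + g/4 * (a - astar T g D)\<^sup>2"
proof -
  show A: "0 \<le> astar T g D" "astar T g D < 1"
  proof -
    have "0 \<le> astar T g D \<and> astar T g D < 1"
    proof (cases "2*D \<le> T + g/2")
      case True then show ?thesis unfolding astar_def by simp
    next
      case False
      note F = ustar_facts[OF T g False]
      then show ?thesis by simp
    qed
    then show "0 \<le> astar T g D" "astar T g D < 1" by auto
  qed
  have u: "0 < 1 - a" "1 - a \<le> 1" using a by auto
  show "kk T g T D a \<ge> kk T g T D (astar T g D) + g/4 * (a - astar T g D)\<^sup>2"
  proof (cases "2*D \<le> T + g/2")
    case True
    then have "astar T g D = 0" unfolding astar_def by simp
    then show ?thesis using sep_case1[OF T g True u] kk_T[OF T a] kk_T[OF T, of 0] by (simp add: power2_commute)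
  next
    case False
    have "kk T g T D a = Ff T g D (1 - a)" by (rule kk_T[OF T a])
    moreover have "kk T g T D (astar T g D) = Ff T g D (1 - astar T g D)" by (rule kk_T[OF T A])
    moreover have "(1 - a - (1 - astar T g D))\<^sup>2 = (a - astar T g D)\<^sup>2" by (simp add: power2_eq_square algebra_simps)
    ultimately show ?thesis using sep_case2[OF T g False u] by simp
  qed
qed

definition gfun :: "real \<Rightarrow> real \<Rightarrow> real \<Rightarrow> real" where
  "gfun T g a = a*(1-a) - g*a/(2*T)"

lemma rb:
  fixes x y :: real assumes "x > 0" "y > 0"
  shows "-((x-y)\<^sup>2/(x*y)) \<le> ln x - ln y - (x-y)/y" "ln x - ln y - (x-y)/y \<le> 0"
proof -
  have "ln (x/y) \<le> x/y - 1" using assms by (intro ln_le_minus_one) simp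
  then show "ln x - ln y - (x-y)/y \<le> 0" using assms by (simp add: ln_div field_simps)
  have "ln (y/x) \<le> y/x - 1" using assms by (intro ln_le_minus_one) simp
  then have "(x-y)/x \<le> ln x - ln y" using assms by (simp add: ln_div field_simps)
  moreover have "(x-y)/x - (x-y)/y = -((x-y)\<^sup>2/(x*y))" using assms by (simp add: field_simps power2_eq_square)
  ultimately show "-((x-y)\<^sup>2/(x*y)) \<le> ln x - ln y - (x-y)/y" by linarith
qed

lemma psi_bound:
  assumes T: "T > 0" and g: "g > 0" and s: "T/2 \<le> s" "s \<le> 2*T" and a: "0 \<le> a" "a < 1"
  shows "\<bar>psi T g s a - psi T g T a - (s - T) * gfun T g a\<bar> \<le> g * (s - T)\<^sup>2 / T\<^sup>2"
proof -
  define b where "b = 1 - a"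
  define e where "e = s - T"
  have b: "0 < b" "b \<le> 1" using a unfolding b_def by auto
  have sp: "s > 0" using s T by simp
  define x1 where "x1 = s*b + T*a"
  have x1: "x1 \<ge> T/2"
  proof -
    have "s*b + T*a \<ge> (T/2)*b + (T/2)*a" using s b a T by (intro add_mono mult_right_mono) auto
    moreover have "(T/2)*b + (T/2)*a = T/2" unfolding b_def by (simp add: field_simps)
    ultimately show ?thesis unfolding x1_def by linarith
  qed
  have x1p: "x1 > 0" using x1 T by simp
  have x1T: "x1 - T = e*b" unfolding x1_def e_def b_def by (simp add: algebra_simps)
  define r1 where "r1 = ln x1 - ln T - (x1 - T)/T"
  define r2 where "r2 = ln s - ln T - (s - T)/T"
  have lnpsi: "ln (1 + T*a/(q*b)) = ln (q*b + T*a) - ln q - ln b" if "q > 0" for q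
  proof -
    have "1 + T*a/(q*b) = (q*b + T*a)/(q*b)" using that b by (simp add: field_simps)
    moreover have "q*b + T*a > 0" using that b a T by (simp add: add_pos_nonneg)
    ultimately show ?thesis using that b by (simp add: ln_div ln_mult)
  qed
  have xT: "T*b + T*a = T" unfolding b_def by (simp add: algebra_simps)
  have eqn: "psi T g s a - psi T g T a - (s - T) * gfun T g a = g/2 * (r1 - r2)"
    unfolding psi_def gfun_def b_def[symmetric] lnpsi[OF sp] lnpsi[OF T] xT r1_def r2_def x1_def x1T[unfolded x1_def]
    using T by (simp add: field_simps e_def b_def)
  have "r1 \<le> 0" "-((x1-T)\<^sup>2/(x1*T)) \<le> r1" unfolding r1_def using rb[OF x1p T] by auto
  moreover have "r2 \<le> 0" "-((s-T)\<^sup>2/(s*T)) \<le> r2" unfolding r2_def using rb[OF sp T] by auto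
  moreover have "(x1-T)\<^sup>2/(x1*T) \<le> 2*e\<^sup>2/T\<^sup>2"
  proof -
    have "(x1-T)\<^sup>2 \<le> e\<^sup>2" unfolding x1T using b by (simp add: power_mult_distrib mult_le_one power_le_one mult_left_le)
    moreover have "x1*T \<ge> T\<^sup>2/2" using x1 T by (simp add: power2_eq_square mult_right_mono)
    ultimately have "(x1-T)\<^sup>2/(x1*T) \<le> e\<^sup>2/(T\<^sup>2/2)" using T x1p by (intro frac_le) auto
    also have "e\<^sup>2/(T\<^sup>2/2) = 2*e\<^sup>2/T\<^sup>2" by simp
    finally show ?thesis .
  qed
  moreover have "(s-T)\<^sup>2/(s*T) \<le> 2*e\<^sup>2/T\<^sup>2"
  proof -
    have "s*T \<ge> T\<^sup>2/2" using s T by (simp add: power2_eq_square mult_right_mono)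
    then have "(s-T)\<^sup>2/(s*T) \<le> e\<^sup>2/(T\<^sup>2/2)" using T sp unfolding e_def by (intro frac_le) auto
    also have "e\<^sup>2/(T\<^sup>2/2) = 2*e\<^sup>2/T\<^sup>2" by simp
    finally show ?thesis .
  qed
  ultimately have "\<bar>r1 - r2\<bar> \<le> 2*e\<^sup>2/T\<^sup>2" unfolding abs_le_iff by linarith
  then have "g/2 * \<bar>r1 - r2\<bar> \<le> g/2 * (2*e\<^sup>2/T\<^sup>2)" using g by (intro mult_left_mono) auto
  then have "\<bar>g/2 * (r1 - r2)\<bar> \<le> g/2 * (2*e\<^sup>2/T\<^sup>2)" using g by (simp only: abs_mult)
  then have "\<bar>psi T g s a - psi T g T a - (s - T) * gfun T g a\<bar> \<le> g/2 * (2*e\<^sup>2/T\<^sup>2)" unfolding eqn .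

  then show ?thesis unfolding e_def by simp
qed

lemma Vr_T: assumes T: "T > 0" and g: "g \<ge> 2*T"
  shows "Vr T g T D = kk T g T D (astar T g D)"
proof (rule antisym)
  have gp: "g > 0" using T g by simp
  note S = sep[OF T g order_refl zero_less_one, where D=D]
  show "Vr T g T D \<le> kk T g T D (astar T g D)" using Vr_le[OF T gp T S(1,2)] .
  show "kk T g T D (astar T g D) \<le> Vr T g T D"
  proof (rule Vr_ge)
    fix a :: real assume a: "0 \<le> a" "a < 1"
    have "0 \<le> g/4 * (a - astar T g D)\<^sup>2" using gp by simp
    then show "kk T g T D (astar T g D) \<le> kk T g T D a" using sep(3)[OF T g a, of D] by linarith
  qed
qed

lemma young_like:
  fixes g x e c L :: real
  assumes "g > 0" "\<bar>c\<bar> \<le> L"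
  shows "g/4 * x\<^sup>2 + e * (x * c) \<ge> - (L\<^sup>2/g) * e\<^sup>2"
proof -
  have "0 \<le> (g*x + 2*e*c)\<^sup>2" by simp
  then have "0 \<le> g\<^sup>2 * x\<^sup>2 + 4*g*e*x*c + 4*e\<^sup>2*c\<^sup>2" by (simp add: power2_eq_square algebra_simps)
  moreover have "\<bar>c\<bar>\<^sup>2 \<le> L\<^sup>2" using assms(2) by (intro power_mono) auto
  then have "c\<^sup>2 \<le> L\<^sup>2" by simp
  then have "e\<^sup>2*c\<^sup>2 \<le> e\<^sup>2*L\<^sup>2" by (simp add: mult_left_mono)
  ultimately have "0 \<le> g\<^sup>2 * x\<^sup>2 + 4*g*e*x*c + 4*e\<^sup>2*L\<^sup>2" by linarith
  moreover have "g/4 * x\<^sup>2 + e * (x * c) + (L\<^sup>2/g) * e\<^sup>2 = (g\<^sup>2 * x\<^sup>2 + 4*g*e*x*c + 4*e\<^sup>2*L\<^sup>2)/(4*g)"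
    using assms(1) by (simp add: field_simps power2_eq_square)
  ultimately have "0 \<le> g/4 * x\<^sup>2 + e * (x * c) + (L\<^sup>2/g) * e\<^sup>2" using assms(1) by simp
  then show ?thesis by linarith
qed


lemma Vr_quad:
  assumes T: "T > 0" and g: "g \<ge> 2*T" and s: "T/2 \<le> s" "s \<le> 2*T"
  shows "\<bar>Vr T g s D - Vr T g T D - (s - T) * gfun T g (astar T g D)\<bar>
     \<le> (g/T\<^sup>2 + (1 + g/(2*T))\<^sup>2/g) * (s - T)\<^sup>2"
proof -
  have gp: "g > 0" using T g by simp
  have sp: "s > 0" using s T by simp
  define as where "as = astar T g D"
  define e where "e = s - T"
  define L where "L = 1 + g/(2*T)"
  note S = sep[OF T g order_refl zero_less_one, where D=D, folded as_def]
  have V0: "Vr T g T D = kk T g T D as" unfolding as_def by (rule Vr_T[OF T g])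
  have pb: "\<bar>psi T g s a - psi T g T a - e * gfun T g a\<bar> \<le> g * e\<^sup>2 / T\<^sup>2" if "0 \<le> a" "a < 1" for a
    using psi_bound[OF T gp s that] unfolding e_def .
  have kks: "kk T g s D a - kk T g T D a = psi T g s a - psi T g T a" for a unfolding kk_def by simp
  have Lnn: "0 \<le> L\<^sup>2/g" using gp by simp
  have dist: "(g/T\<^sup>2 + L\<^sup>2/g) * e\<^sup>2 = g * e\<^sup>2 / T\<^sup>2 + (L\<^sup>2/g) * e\<^sup>2"
    by (simp add: distrib_right)
  have up: "Vr T g s D \<le> Vr T g T D + e * gfun T g as + (g/T\<^sup>2 + L\<^sup>2/g) * e\<^sup>2"
  proof -
    have "Vr T g s D \<le> kk T g s D as" by (rule Vr_le[OF T gp sp S(1,2)])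
    also have "\<dots> \<le> kk T g T D as + e * gfun T g as + g * e\<^sup>2 / T\<^sup>2"
      using pb[OF S(1,2)] kks[of as] unfolding abs_le_iff by linarith
    also have "\<dots> \<le> Vr T g T D + e * gfun T g as + (g/T\<^sup>2 + L\<^sup>2/g) * e\<^sup>2"
      unfolding V0 dist using mult_nonneg_nonneg[OF Lnn zero_le_power2[of e]] by linarith
    finally show ?thesis .
  qed
  have lo: "Vr T g T D + e * gfun T g as - (g/T\<^sup>2 + L\<^sup>2/g) * e\<^sup>2 \<le> Vr T g s D"
  proof (rule Vr_ge)
    fix a :: real assume a: "0 \<le> a" "a < 1"
    have gT: "0 \<le> g/(2*T)" using gp T by simp
    have c: "\<bar>1 - a - as - g/(2*T)\<bar> \<le> L" unfolding L_def abs_le_iff using a S(1,2) gT by linarith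
    have gd: "gfun T g a - gfun T g as = (a - as) * (1 - a - as - g/(2*T))"
      unfolding gfun_def by (simp add: algebra_simps power2_eq_square diff_divide_distrib)
    have y: "g/4 * (a - as)\<^sup>2 + e * ((a - as) * (1 - a - as - g/(2*T))) \<ge> - (L\<^sup>2/g) * e\<^sup>2"
      by (rule young_like[OF gp c])
    have "kk T g s D a \<ge> kk T g T D a + e * gfun T g a - g * e\<^sup>2 / T\<^sup>2"
      using pb[OF a] kks[of a] unfolding abs_le_iff by linarith
    moreover have "kk T g T D a \<ge> kk T g T D as + g/4 * (a - as)\<^sup>2" using sep(3)[OF T g a, of D] unfolding as_def .
    moreover have "e * gfun T g a = e * gfun T g as + e * ((a - as) * (1 - a - as - g/(2*T)))"
    proof -
      have aux: "\<And>x y z :: real. x - y = z \<Longrightarrow> e * x = e * y + e * z" by (simp add: algebra_simps)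
      show ?thesis by (rule aux[OF gd])
    qed
    ultimately show "Vr T g T D + e * gfun T g as - (g/T\<^sup>2 + L\<^sup>2/g) * e\<^sup>2 \<le> kk T g s D a"
      unfolding V0 dist using y by linarith
  qed
  from up lo show ?thesis unfolding e_def[symmetric] L_def[symmetric] as_def[symmetric] abs_le_iff
    by linarith
qed


lemma gfun_nonpos: "T > 0 \<Longrightarrow> g \<ge> 2*T \<Longrightarrow> 0 \<le> a \<Longrightarrow> gfun T g a \<le> 0"
proof -
  assume *: "T > 0" "g \<ge> 2*T" "0 \<le> a"
  have h1: "g/(2*T) \<ge> 1" using * by (simp add: le_divide_eq)
  have "1 - a - g/(2*T) \<le> 0" using * h1 by linarith
  moreover have "gfun T g a = a * (1 - a - g/(2*T))" unfolding gfun_def by (simp add: algebra_simps)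
  ultimately show ?thesis using * by (simp add: mult_nonneg_nonpos)
qed

lemma gfun_neg: "T > 0 \<Longrightarrow> g \<ge> 2*T \<Longrightarrow> 0 < a \<Longrightarrow> gfun T g a < 0"
proof -
  assume *: "T > 0" "g \<ge> 2*T" "0 < a"
  have h1: "g/(2*T) \<ge> 1" using * by (simp add: le_divide_eq)
  have "1 - a - g/(2*T) < 0" using * h1 by linarith
  moreover have "gfun T g a = a * (1 - a - g/(2*T))" unfolding gfun_def by (simp add: algebra_simps)
  ultimately show ?thesis using * by (simp add: mult_pos_neg)
qed

lemma gfun_bound: "T > 0 \<Longrightarrow> g > 0 \<Longrightarrow> 0 \<le> a \<Longrightarrow> a < 1 \<Longrightarrow> \<bar>gfun T g a\<bar> \<le> 1 + g/(2*T)"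
proof -
  assume *: "T > 0" "g > 0" "0 \<le> a" "a < 1"
  have gT: "0 \<le> g/(2*T)" using * by simp
  have "gfun T g a = a * (1 - a - g/(2*T))" unfolding gfun_def by (simp add: algebra_simps)
  also have "\<bar>\<dots>\<bar> = a * \<bar>1 - a - g/(2*T)\<bar>" using * by (simp add: abs_mult)
  also have "\<dots> \<le> 1 * (1 + g/(2*T))"
  proof (rule mult_mono)
    show "\<bar>1 - a - g/(2*T)\<bar> \<le> 1 + g/(2*T)" unfolding abs_le_iff using * gT by linarith
  qed (use * gT in auto)
  finally show ?thesis by simp
qed

lemma astar_pos: assumes "T > 0" "g \<ge> 2*T" "\<not> 2*D \<le> T + g/2" shows "0 < astar T g D"
  using ustar_facts[OF assms] by simp


lemma part3:
  fixes muT sigT gam :: real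
  assumes sT: "sigT > 0" and gg: "gam \<ge> 2 * sigT\<^sup>2"
  shows "\<exists>d<0. ((\<lambda>s. pop_loss muT sigT gam \<infinity> muT s) has_real_derivative d) (at sigT)"
proof -
  define T where "T = sigT\<^sup>2"
  have T: "T > 0" unfolding T_def using sT by simp
  have g: "gam \<ge> 2*T" using gg unfolding T_def .
  have gp: "gam > 0" using T g by simp
  define nd where "nd = normal_density muT sigT"
  define P2 where "P2 = (\<lambda>s. LINT th|lborel. nd th * Vr T gam s ((muT - th)\<^sup>2))"
  define f where "f th = nd th * gfun T gam (astar T gam ((muT - th)\<^sup>2))" for th
  define ds where "ds = integral\<^sup>L lborel f"
  define K where "K = gam/T\<^sup>2 + (1 + gam/(2*T))\<^sup>2/gam"
  have meas_f[measurable]: "f \<in> borel_measurable lborel" unfolding f_def gfun_def astar_def nd_def by measurable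
  have int_f: "integrable lborel f"
  proof (rule Bochner_Integration.integrable_bound)
    show "integrable lborel (\<lambda>th. nd th * (1 + gam/(2*T)))" unfolding nd_def using sT by simp
    show "f \<in> borel_measurable lborel" by (rule meas_f)
    show "AE x in lborel. norm (f x) \<le> norm (nd x * (1 + gam/(2*T)))"
    proof (rule AE_I2)
      fix x
      note S = sep[OF T g order_refl zero_less_one, where D="(muT - x)\<^sup>2"]
      have "\<bar>gfun T gam (astar T gam ((muT - x)\<^sup>2))\<bar> \<le> 1 + gam/(2*T)" by (rule gfun_bound[OF T gp S(1,2)])
      then have "nd x * \<bar>gfun T gam (astar T gam ((muT - x)\<^sup>2))\<bar> \<le> nd x * (1 + gam/(2*T))"
        unfolding nd_def by (intro mult_left_mono) auto
      moreover have "0 \<le> 1 + gam/(2*T)" using gp T by simp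
      ultimately show "norm (f x) \<le> norm (nd x * (1 + gam/(2*T)))" unfolding f_def nd_def by (simp add: abs_mult)
    qed
  qed
  have intV: "integrable lborel (\<lambda>th. nd th * Vr T gam s ((muT - th)\<^sup>2))" if "s > 0" for s
    using integrable_nd_GG[OF sT T gp that, of \<infinity> muT muT] unfolding nd_def by (simp add: GG_alt)
  have quad: "\<bar>P2 s - P2 T - ds * (s - T)\<bar> \<le> K * (s - T)\<^sup>2" if s: "T/2 \<le> s" "s \<le> 2*T" for s
  proof -
    have sp: "s > 0" using s T by simp
    define h where "h th = nd th * Vr T gam s ((muT - th)\<^sup>2) - nd th * Vr T gam T ((muT - th)\<^sup>2) - (s - T) * f th" for th
    have ih: "integrable lborel h" unfolding h_def using intV[OF sp] intV[OF T] int_f by simp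
    have eqh: "P2 s - P2 T - ds * (s - T) = integral\<^sup>L lborel h"
      unfolding h_def P2_def ds_def using intV[OF sp] intV[OF T] int_f by simp
    have iK: "integrable lborel (\<lambda>th. K * (s - T)\<^sup>2 * nd th)" unfolding nd_def using sT by simp
    have bnd: "\<bar>h th\<bar> \<le> K * (s - T)\<^sup>2 * nd th" for th
    proof -
      have "h th = nd th * (Vr T gam s ((muT - th)\<^sup>2) - Vr T gam T ((muT - th)\<^sup>2) - (s - T) * gfun T gam (astar T gam ((muT - th)\<^sup>2)))"
        unfolding h_def f_def by (simp add: algebra_simps)
      then have "\<bar>h th\<bar> = nd th * \<bar>Vr T gam s ((muT - th)\<^sup>2) - Vr T gam T ((muT - th)\<^sup>2) - (s - T) * gfun T gam (astar T gam ((muT - th)\<^sup>2))\<bar>"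
        unfolding nd_def by (simp add: abs_mult)
      also have "\<dots> \<le> nd th * (K * (s - T)\<^sup>2)"
        using Vr_quad[OF T g s, of "(muT - th)\<^sup>2"] unfolding K_def nd_def by (intro mult_left_mono) auto
      finally show ?thesis by (simp add: algebra_simps)
    qed
    have i1: "integral\<^sup>L lborel h \<le> integral\<^sup>L lborel (\<lambda>th. K * (s - T)\<^sup>2 * nd th)"
      using ih iK bnd by (intro integral_mono) (auto simp: abs_le_iff)
    have i2: "integral\<^sup>L lborel (\<lambda>th. - h th) \<le> integral\<^sup>L lborel (\<lambda>th. K * (s - T)\<^sup>2 * nd th)"
      using ih iK bnd by (intro integral_mono) (auto simp: abs_le_iff)
    have i3: "integral\<^sup>L lborel (\<lambda>th. K * (s - T)\<^sup>2 * nd th) = K * (s - T)\<^sup>2" unfolding nd_def using sT by simp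
    have i4: "integral\<^sup>L lborel (\<lambda>th. - h th) = - integral\<^sup>L lborel h" by simp
    show ?thesis unfolding eqh abs_le_iff using i1 i2 i3 i4 by linarith
  qed
  have dP2: "(P2 has_real_derivative ds) (at T)"
  proof (rule deriv_quad[where r="T/2" and C=K])
    show "0 < T/2" using T by simp
    fix h :: real assume "\<bar>h\<bar> < T/2"
    then have "T/2 \<le> T + h" "T + h \<le> 2*T" using T by auto
    from quad[OF this] show "\<bar>P2 (T + h) - P2 T - ds * h\<bar> \<le> K * h\<^sup>2" by simp
  qed
  have dsq: "((\<lambda>x. x\<^sup>2) has_real_derivative 2 * sigT) (at sigT)"
    by (auto intro!: derivative_eq_intros)
  have dcomp: "((\<lambda>x. P2 (x\<^sup>2)) has_real_derivative ds * (2 * sigT)) (at sigT)"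
    using DERIV_chain'[OF dsq, of P2 ds] dP2 unfolding T_def by simp
  have ev: "eventually (\<lambda>x. pop_loss muT sigT gam \<infinity> muT x = P2 (x\<^sup>2)) (nhds sigT)"
  proof -
    have "eventually (\<lambda>x. x \<in> {0<..}) (nhds sigT)" using sT by (intro eventually_nhds_in_open) auto
    then show ?thesis
    proof (rule eventually_mono)
      fix x :: real assume "x \<in> {0<..}"
      then have x: "x \<noteq> 0" by simp
      show "pop_loss muT sigT gam \<infinity> muT x = P2 (x\<^sup>2)"
        unfolding pop_loss_eq[OF x sT gp] P2_def nd_def T_def by (simp add: GG_alt)
    qed
  qed
  have dpop: "((\<lambda>x. pop_loss muT sigT gam \<infinity> muT x) has_real_derivative ds * (2 * sigT)) (at sigT)"
    using dcomp by (subst DERIV_cong_ev[OF refl ev refl])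
  have fnp: "f th \<le> 0" for th
  proof -
    note S = sep[OF T g order_refl zero_less_one, where D="(muT - th)\<^sup>2"]
    show ?thesis unfolding f_def nd_def using gfun_nonpos[OF T g S(1)] by (simp add: mult_nonneg_nonpos)
  qed
  have dsle: "ds \<le> 0"
  proof -
    have "0 \<le> integral\<^sup>L lborel (\<lambda>x. - f x)"
      by (rule integral_nonneg_AE) (use fnp in auto)
    then show ?thesis unfolding ds_def by simp
  qed
  define c where "c = muT + sqrt (T + gam)"
  have fneg: "f th < 0" if "th \<in> {c<..<c+1}" for th
  proof -
    have "sqrt (T + gam) < th - muT" using that unfolding c_def by simp
    then have "(sqrt (T + gam))\<^sup>2 < (th - muT)\<^sup>2" using T gp by (intro power_strict_mono) auto
    then have "T + gam < (muT - th)\<^sup>2" using T gp by (simp add: power2_commute)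
    then have nc: "\<not> 2 * (muT - th)\<^sup>2 \<le> T + gam/2" using T gp by simp
    have "gfun T gam (astar T gam ((muT - th)\<^sup>2)) < 0" by (rule gfun_neg[OF T g astar_pos[OF T g nc]])
    moreover have "nd th > 0" unfolding nd_def using sT by (rule normal_density_pos)
    ultimately show ?thesis unfolding f_def by (simp add: mult_pos_neg)
  qed
  have dsne: "ds \<noteq> 0"
  proof
    assume "ds = 0"
    then have "integral\<^sup>L lborel (\<lambda>x. - f x) = 0" unfolding ds_def by simp
    moreover have "integrable lborel (\<lambda>x. - f x)" using int_f by simp
    ultimately have "AE x in lborel. - f x = 0"
      using integral_nonneg_eq_0_iff_AE[of lborel "\<lambda>x. - f x"] fnp by auto
    then have "AE x in lborel. x \<notin> {c<..<c+1}"
      by (rule eventually_mono) (use fneg in force)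
    then have "emeasure lborel {c<..<c+1} = 0"
      by (subst (asm) AE_iff_measurable[of "{c<..<c+1}"]) auto
    then show False by simp
  qed
  have "ds * (2 * sigT) < 0" using dsle dsne sT by (simp add: mult_neg_pos)
  then show ?thesis using dpop by blast
qed

lemma GG_facts:
  assumes "sigT > 0" "gam > 0" "sigA \<noteq> 0" "Gam > 0"
  shows "mono (GG (sigT\<^sup>2) gam Gam (sigA\<^sup>2))"
    "GG (sigT\<^sup>2) gam Gam (sigA\<^sup>2) \<in> borel_measurable borel"
    "\<And>mu c. integrable lborel (\<lambda>th. normal_density mu sigT th * GG (sigT\<^sup>2) gam Gam (sigA\<^sup>2) ((c - th)\<^sup>2))"
    "\<And>D e1 e2. e1 + e2 \<ge> 0 \<Longrightarrow> GG (sigT\<^sup>2) gam Gam (sigA\<^sup>2) (D + e1) + GG (sigT\<^sup>2) gam Gam (sigA\<^sup>2) (D + e2) \<le> 2 * GG (sigT\<^sup>2) gam Gam (sigA\<^sup>2) D + (e1 + e2)"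
proof -
  have p: "sigT\<^sup>2 > 0" "sigA\<^sup>2 > 0" using assms by auto
  show "mono (GG (sigT\<^sup>2) gam Gam (sigA\<^sup>2))" by (auto simp: mono_def intro: GG_mono[OF p(1) assms(2) p(2) assms(4)])
  show "GG (sigT\<^sup>2) gam Gam (sigA\<^sup>2) \<in> borel_measurable borel" by (rule GG_measurable[OF p(1) assms(2) p(2) assms(4)])
  show "\<And>mu c. integrable lborel (\<lambda>th. normal_density mu sigT th * GG (sigT\<^sup>2) gam Gam (sigA\<^sup>2) ((c - th)\<^sup>2))"
    by (rule integrable_nd_GG[OF assms(1) p(1) assms(2) p(2) assms(4)])
  show "\<And>D e1 e2. e1 + e2 \<ge> 0 \<Longrightarrow> GG (sigT\<^sup>2) gam Gam (sigA\<^sup>2) (D + e1) + GG (sigT\<^sup>2) gam Gam (sigA\<^sup>2) (D + e2) \<le> 2 * GG (sigT\<^sup>2) gam Gam (sigA\<^sup>2) D + (e1 + e2)"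
    by (rule GG_second[OF p(1) assms(2) p(2) assms(4)])
qed

theorem proposition8:
  fixes muT sigT gam :: real and Gam :: ereal
  assumes "sigT > 0" and "gam > 0" and "Gam > 0"
  shows "(\<forall>sigA>0. \<forall>muA. pop_loss muT sigT gam Gam muT sigA \<le> pop_loss muT sigT gam Gam muA sigA)
       \<and> ((\<lambda>m. pop_loss muT sigT gam Gam m sigT) has_real_derivative 0) (at muT)
       \<and> (Gam = \<infinity> \<and> gam \<ge> 2 * sigT\<^sup>2 \<longrightarrow>
            (\<exists>d<0. ((\<lambda>s. pop_loss muT sigT gam Gam muT s) has_real_derivative d) (at sigT)))"
proof (intro conjI allI impI)
  fix sigA :: real and muA assume sA: "sigA > 0"
  then have sA': "sigA \<noteq> 0" by simp
  note F = GG_facts[OF assms(1,2) sA' assms(3)]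
  show "pop_loss muT sigT gam Gam muT sigA \<le> pop_loss muT sigT gam Gam muA sigA"
    unfolding pop_loss_eq[OF sA' assms(1,2)] by (rule part1_gen[OF assms(1) F(1,2,3)])
next
  have sT': "sigT \<noteq> 0" using assms by simp
  note F = GG_facts[OF assms(1,2) sT' assms(3)]
  show "((\<lambda>m. pop_loss muT sigT gam Gam m sigT) has_real_derivative 0) (at muT)"
    unfolding pop_loss_eq[OF sT' assms(1,2)] by (rule part2_gen[OF assms(1) F])
next
  assume h: "Gam = \<infinity> \<and> gam \<ge> 2 * sigT\<^sup>2"
  then show "\<exists>d<0. ((\<lambda>s. pop_loss muT sigT gam Gam muT s) has_real_derivative d) (at sigT)"
    using part3[OF assms(1), of gam muT] by simp
qed

end
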